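(* Let $\alpha>\sqrt2+1$. The expected runtime of the Metropolis algorithm with parameter $\alpha$ on $\mathrm{DLB}:\{0,1\}^n\to\mathbb{R}$ is at most $\frac{n^2}{C(\alpha)}$, where $C(\alpha)=\frac{2}{\alpha}\left(\frac12-2\sum_{k=1}^\infty k\alpha^{-2k}\right)$.
   Context: Let $n$ be an even positive integer. For $x\in\{0,1\}^n$ consider the blocks $(x_{2\ell+1},x_{2\ell+2})$, $\ell=0,\dots,\frac n2-1$. If $x\neq(1,\dots,1)$, let $m$ be the smallest $\ell$ with $x_{2\ell+1}\neq 1$ or $x_{2\ell+2}\neq 1$, and define $\mathrm{DLB}(x)=2m+1$ if $x_{2m+1}+x_{2m+2}=0$ and $\mathrm{DLB}(x)=2m$ if $x_{2m+1}+x_{2m+2}=1$; set $\mathrm{DLB}(1,\dots,1)=n$. The Metropolis algorithm with parameter $\alpha>1$ maximizing $f:\{0,1\}^n\to\mathbb{R}$: choose $x^{(0)}$ uniformly at random in $\{0,1\}^n$. In each iteration $t=1,2,\dots$, choose $i\in[1..n]$ uniformly at random and let $y$ be $x^{(t-1)}$ with the $i$-th bit flipped. If $f(y)\ge f(x^{(t-1)})$ set $x^{(t)}=y$; otherwise set $x^{(t)}=y$ with probability $\alpha^{f(y)-f(x^{(t-1)})}$ and $x^{(t)}=x^{(t-1)}$ otherwise. Each generated search point is evaluated; the runtime is the number of fitness evaluations until (and including) the first evaluation of an optimum of $f$. *)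

theory Defs
  imports "HOL-Probability.Probability"
begin

text \<open>Bit strings of length n are bool lists of length n; bit i (1-based in the paper)
  is entry i-1 of the list.\<close>

definition DLB :: "nat \<Rightarrow> bool list \<Rightarrow> nat" where
  "DLB n x =
     (if (\<forall>l < n div 2. x ! (2*l) \<and> x ! (2*l+1)) then n
      else (let m = (LEAST l. \<not> (x ! (2*l) \<and> x ! (2*l+1)))
            in if \<not> x ! (2*m) \<and> \<not> x ! (2*m+1) then 2*m+1 else 2*m))"

text \<open>One iteration of Metropolis: randomness is a position i (uniform in {0..<n})
  and a real u (uniform in [0,1]); a worsening move is accepted iff u < alpha^(f y - f x),
  which happens with probability alpha^(f y - f x).\<close>

definition metro_step :: "real \<Rightarrow> (bool list \<Rightarrow> real) \<Rightarrow> bool list \<Rightarrow> nat \<times> real \<Rightarrow> bool list" where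
  "metro_step \<alpha> f x r =
     (let y = x[fst r := \<not> x ! fst r]
      in if f y \<ge> f x then y
         else if snd r < \<alpha> powr (f y - f x) then y else x)"

fun metro_traj :: "real \<Rightarrow> (bool list \<Rightarrow> real) \<Rightarrow> bool list \<Rightarrow> (nat \<Rightarrow> nat \<times> real) \<Rightarrow> nat \<Rightarrow> bool list" where
  "metro_traj \<alpha> f x0 \<omega> 0 = x0"
| "metro_traj \<alpha> f x0 \<omega> (Suc t) = metro_step \<alpha> f (metro_traj \<alpha> f x0 \<omega> t) (\<omega> t)"

definition is_optimum :: "nat \<Rightarrow> (bool list \<Rightarrow> real) \<Rightarrow> bool list \<Rightarrow> bool" where
  "is_optimum n f x \<longleftrightarrow> length x = n \<and> (\<forall>z. length z = n \<longrightarrow> f z \<le> f x)"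

text \<open>Runtime = number of fitness evaluations until the first evaluation of an optimum:
  the initial point costs 1 evaluation, each iteration one more; an optimal offspring is
  always accepted, so this is 1 + first time t with x^(t) optimal (infinite if never).\<close>

definition metro_runtime :: "nat \<Rightarrow> real \<Rightarrow> (bool list \<Rightarrow> real) \<Rightarrow> bool list \<Rightarrow> (nat \<Rightarrow> nat \<times> real) \<Rightarrow> ennreal" where
  "metro_runtime n \<alpha> f x0 \<omega> =
     (if \<exists>t. is_optimum n f (metro_traj \<alpha> f x0 \<omega> t)
      then ennreal (1 + real (LEAST t. is_optimum n f (metro_traj \<alpha> f x0 \<omega> t)))
      else \<infinity>)"

definition metro_space :: "nat \<Rightarrow> (bool list \<times> (nat \<Rightarrow> nat \<times> real)) measure" where
  "metro_space n =
     measure_pmf (pmf_of_set {xs :: bool list. length xs = n}) \<Otimes>\<^sub>M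
     (\<Pi>\<^sub>M t\<in>(UNIV :: nat set).
        measure_pmf (pmf_of_set {..<n}) \<Otimes>\<^sub>M uniform_measure lborel {0..1::real})"

definition expected_runtime :: "nat \<Rightarrow> real \<Rightarrow> (bool list \<Rightarrow> real) \<Rightarrow> ennreal" where
  "expected_runtime n \<alpha> f =
     (\<integral>\<^sup>+ \<omega>. metro_runtime n \<alpha> f (fst \<omega>) (snd \<omega>) \<partial>metro_space n)"

definition C_const :: "real \<Rightarrow> real" where
  "C_const \<alpha> = (2 / \<alpha>) * (1/2 - 2 * (\<Sum>k. real (Suc k) * \<alpha> powr (- 2 * real (Suc k))))"

end

theory Submission
  imports Defs
begin


lemma S_sums:
  fixes \<alpha> :: real assumes "\<alpha> > 1"
  shows "(\<lambda>k. real (Suc k) * \<alpha> powr (- 2 * real (Suc k))) sums ((1/\<alpha>^2) / (1 - 1/\<alpha>^2)^2)"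
proof -
  define q where "q = 1/\<alpha>^2"
  have q: "norm q < 1" "0 < q" using assms by (auto simp: q_def field_simps)
  have e: "\<alpha> powr (- 2 * real (Suc k)) = q * q ^ k" for k
  proof -
    have "\<alpha> powr (- 2 * real (Suc k)) = inverse (\<alpha> powr (real (2 * Suc k)))"
      by (simp add: powr_minus[symmetric])
    also have "\<dots> = inverse (\<alpha> ^ (2 * Suc k))" using assms
      by (subst powr_realpow) auto
    also have "\<dots> = inverse (\<alpha>^2) ^ Suc k"
      by (simp only: power_mult power_inverse)
    finally show ?thesis by (simp add: q_def field_simps)
  qed
  have "(\<lambda>k. q * (of_nat (Suc k) * q ^ k)) sums (q * (1 / (1 - q)^2))"
    by (rule sums_mult[OF geometric_deriv_sums[OF q(1)]])
  then show ?thesis unfolding e q_def[symmetric] by (simp add: algebra_simps)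
qed

lemma S_bound:
  fixes \<alpha> :: real assumes "\<alpha> > sqrt 2 + 1"
  shows "4 * (\<Sum>k. real (Suc k) * \<alpha> powr (- 2 * real (Suc k))) < 1"
proof -
  have a1: "\<alpha> > 1" using assms by (smt (verit) real_sqrt_ge_zero)
  define q where "q = 1/\<alpha>^2"
  have eq: "(\<Sum>k. real (Suc k) * \<alpha> powr (- 2 * real (Suc k))) = q / (1-q)^2"
    using sums_unique[OF S_sums[OF a1]] by (simp add: q_def)
  have s2: "sqrt 2 * sqrt 2 = 2" by simp
  have "\<alpha>^2 > (sqrt 2 + 1)^2" using assms by (smt (verit) power_strict_mono real_sqrt_ge_zero zero_le_numeral zero_less_numeral zero_less_power)
  hence a2: "\<alpha>^2 > 3 + 2 * sqrt 2" by (simp add: power2_eq_square algebra_simps s2)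
  have q0: "0 < q" "q < 1" using a1 by (auto simp: q_def field_simps)
  have "q * (3 + 2 * sqrt 2) < 1" using a2 q0 unfolding q_def
    by (simp add: field_simps)
  have "(2 * sqrt 2)^2 < 3^2" by (simp add: power_mult_distrib)
  hence p: "2 * sqrt 2 < 3" by (rule power_less_imp_less_base) simp
  have "q * (3 + 2 * sqrt 2) * (3 - 2 * sqrt 2) < 1 * (3 - 2 * sqrt 2)"
    by (rule mult_strict_right_mono) (use \<open>q * (3 + 2 * sqrt 2) < 1\<close> p in auto)
  hence "q * (3 + 2 * sqrt 2) * (3 - 2 * sqrt 2) < 3 - 2 * sqrt 2" by simp
  hence "q < 3 - 2 * sqrt 2" by (simp add: algebra_simps s2)
  hence "(3 - q)^2 > (2 * sqrt 2)^2" using q0 by (intro power_strict_mono) (auto simp: real_sqrt_ge_zero)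
  hence "4 * q < (1 - q)^2" by (simp add: power2_eq_square algebra_simps s2)
  hence "4 * (q / (1-q)^2) < 1" using q0 by (simp add: field_simps)
  thus ?thesis using eq by simp
qed



definition blk :: "bool list \<Rightarrow> nat \<Rightarrow> bool" where
  "blk x l \<longleftrightarrow> x ! (2*l) \<and> x ! (2*l+1)"

definition flip :: "bool list \<Rightarrow> nat \<Rightarrow> bool list" where
  "flip x i = x[i := \<not> x ! i]"

definition Phi :: "nat \<Rightarrow> nat \<Rightarrow> real" where
  "Phi n w = (if w = n then real n else if odd w then real w - 1 else real w + 1/2)"

lemma DLB_alt: "DLB n x = (if \<forall>l<n div 2. blk x l then n else
   (let m = LEAST l. \<not> blk x l in if \<not> x!(2*m) \<and> \<not> x!(2*m+1) then 2*m+1 else 2*m))"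
  unfolding DLB_def blk_def by (rule refl)

lemma DLB_all: "\<forall>l<n div 2. blk x l \<Longrightarrow> DLB n x = n"
  unfolding DLB_alt by (rule if_P)

lemma DLB_notall: "\<not> (\<forall>l<n div 2. blk x l) \<Longrightarrow> DLB n x =
   (let m = LEAST l. \<not> blk x l in if \<not> x!(2*m) \<and> \<not> x!(2*m+1) then 2*m+1 else 2*m)"
  unfolding DLB_alt by (rule if_not_P)

lemma DLB_eq:
  assumes "m < n div 2" "\<forall>l<m. blk x l" "\<not> blk x m"
  shows "DLB n x = (if \<not> x!(2*m) \<and> \<not> x!(2*m+1) then 2*m+1 else 2*m)"
proof -
  have na: "\<not> (\<forall>l < n div 2. blk x l)" using assms by blast
  have L: "(LEAST l. \<not> blk x l) = m"
    by (rule Least_equality) (use assms in \<open>auto simp: not_less[symmetric]\<close>)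
  show ?thesis unfolding DLB_notall[OF na] L Let_def by (rule refl)
qed

lemma DLB_ge:
  assumes "m \<le> n div 2" "\<forall>l<m. blk x l"
  shows "2*m \<le> DLB n x"
proof (cases "\<forall>l < n div 2. blk x l")
  case True thus ?thesis using assms DLB_all[OF True] by simp
next
  case False
  define m' where "m' = (LEAST l. \<not> blk x l)"
  have "\<exists>l. \<not> blk x l" using False by auto
  hence "\<not> blk x m'" unfolding m'_def by (rule LeastI_ex)
  hence "m \<le> m'" using assms(2) by (meson not_le)
  thus ?thesis unfolding DLB_notall[OF False] m'_def[symmetric] Let_def by simp
qed

lemma DLB_crit:
  assumes "even n" "DLB n x \<noteq> n"
  obtains m where "m < n div 2" "\<forall>l<m. blk x l" "\<not> blk x m"
proof -
  have F: "\<not> (\<forall>l < n div 2. blk x l)" using assms DLB_all by auto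
  then obtain l0 where l0: "l0 < n div 2" "\<not> blk x l0" by auto
  define m where "m = (LEAST l. \<not> blk x l)"
  have "\<exists>l. \<not> blk x l" using l0 by auto
  hence "\<not> blk x m" unfolding m_def by (rule LeastI_ex)
  moreover have "m \<le> l0" unfolding m_def using l0 by (simp add: Least_le)
  moreover have "\<forall>l<m. blk x l" unfolding m_def using not_less_Least by blast
  ultimately show ?thesis using l0 by (intro that[of m]) auto
qed

lemma DLB_le:
  assumes "even n" shows "DLB n x \<le> n"
proof (cases "DLB n x = n")
  case False
  then obtain m where "m < n div 2" "\<forall>l<m. blk x l" "\<not> blk x m" using DLB_crit assms by blast
  then show ?thesis using DLB_eq[of m n x] assms by auto
qed simp

lemma Phi_nonneg: "even n \<Longrightarrow> w \<le> n \<Longrightarrow> 0 \<le> Phi n w"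
  unfolding Phi_def using odd_pos[of w] by auto

lemma Phi_le: "even n \<Longrightarrow> w \<le> n \<Longrightarrow> Phi n w \<le> n"
  unfolding Phi_def by auto

lemma Phi_ge: assumes "even n" "k \<le> w" "w \<le> n" "even k" shows "real k \<le> Phi n w"
proof -
  have "odd w \<Longrightarrow> k + 1 \<le> w" using assms by (metis Suc_eq_plus1 le_neq_implies_less less_eq_Suc_le)
  thus ?thesis using assms unfolding Phi_def by auto
qed

lemma Phi_even: "2*j \<noteq> n \<Longrightarrow> Phi n (2*j) = 2*j + 1/2"
  unfolding Phi_def by auto

lemma Phi_odd: "even n \<Longrightarrow> Phi n (2*j+1) = 2*j"
  unfolding Phi_def by auto

lemma flip_nth: "k < length x \<Longrightarrow> flip x i ! k = (if k = i then \<not> x!i else x!k)"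
  unfolding flip_def by (cases "k = i") auto

lemma length_flip[simp]: "length (flip x i) = length x"
  unfolding flip_def by simp

lemma blk_flip_other:
  assumes "length x = n" "even n" "l < n div 2" "i div 2 \<noteq> l"
  shows "blk (flip x i) l = blk x l"
proof -
  have "2*l+1 < n" using assms by auto
  moreover have "i \<noteq> 2*l" "i \<noteq> 2*l+1" using assms(4) by auto
  ultimately show ?thesis using assms unfolding blk_def by (simp add: flip_nth)
qed

lemma sum_blocks: "(\<Sum>i<2*(N::nat). f i) = (\<Sum>j<N. f (2*j) + (f (2*j+1)::real))"
  by (induction N) (auto simp: numeral_2_eq_2)

lemma sum_ifs:
  assumes "m < N"
  shows "(\<Sum>j<N. (if j < m then h (m - j) else if j = m then e else 0)) = (\<Sum>k<m. h (Suc k)) + (e::real)"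
  using assms
proof (induction N)
  case (Suc N)
  show ?case
  proof (cases "m = N")
    case True
    have "(\<Sum>j<m. (if j < m then h (m - j) else if j = m then e else 0)) = (\<Sum>j<m. h (Suc (m - Suc j)))"
      by (intro sum.cong) (auto simp: Suc_diff_Suc)
    also have "\<dots> = (\<Sum>k<m. h (Suc k))" by (rule sum.nat_diff_reindex)
    finally show ?thesis using True by simp
  next
    case False thus ?thesis using Suc by simp
  qed
qed simp



lemma pos_lt: "even (n::nat) \<Longrightarrow> j < n div 2 \<Longrightarrow> 2*j+1 < n" by auto

lemma flip_prefix:
  assumes "length x = n" "even n" "m < n div 2" "\<forall>l<m. blk x l" "j < m" "i = 2*j \<or> i = 2*j+1"
  shows "DLB n (flip x i) = 2*j"
proof -
  have j: "j < n div 2" using assms by simp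
  have A: "\<forall>l<j. blk (flip x i) l" using assms by (auto simp: blk_flip_other)
  have bj: "blk x j" using assms by simp
  have p: "2*j+1 < n" using pos_lt[OF assms(2) j] .
  have B: "\<not> blk (flip x i) j" "\<not> (\<not> flip x i ! (2*j) \<and> \<not> flip x i ! (2*j+1))"
    using assms(6) bj p assms(1) by (auto simp: blk_def flip_nth)
  show ?thesis using DLB_eq[OF j A B(1)] B(2) by simp
qed

lemma flip_suffix:
  assumes "length x = n" "even n" "m < n div 2" "\<forall>l<m. blk x l" "\<not> blk x m" "m < i div 2" "i < n"
  shows "DLB n (flip x i) = DLB n x"
proof -
  have A: "\<forall>l<m. blk (flip x i) l" using assms by (auto simp: blk_flip_other)
  have p: "2*m+1 < n" using pos_lt[OF assms(2) assms(3)] .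
  have i1: "i \<noteq> 2*m" "i \<noteq> 2*m+1" using assms(6) by auto
  have e: "flip x i ! (2*m) = x ! (2*m)" "flip x i ! (2*m+1) = x ! (2*m+1)"
    using p i1 assms(1) by (auto simp: flip_nth)
  have B: "\<not> blk (flip x i) m" using assms(5) e by (simp add: blk_def)
  show ?thesis using DLB_eq[OF assms(3) A B] DLB_eq[OF assms(3) assms(4) assms(5)] e by simp
qed

lemma flip_crit00:
  assumes "length x = n" "even n" "m < n div 2" "\<forall>l<m. blk x l" "\<not> x!(2*m)" "\<not> x!(2*m+1)"
    "i = 2*m \<or> i = 2*m+1"
  shows "DLB n (flip x i) = 2*m"
proof -
  have A: "\<forall>l<m. blk (flip x i) l" using assms by (auto simp: blk_flip_other)
  have p: "2*m+1 < n" using pos_lt[OF assms(2) assms(3)] .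
  have B: "\<not> blk (flip x i) m" "\<not> (\<not> flip x i ! (2*m) \<and> \<not> flip x i ! (2*m+1))"
    using assms p by (auto simp: blk_def flip_nth)
  show ?thesis using DLB_eq[OF assms(3) A B(1)] B(2) by simp
qed

lemma flip_crit_true:
  assumes "length x = n" "even n" "m < n div 2" "\<forall>l<m. blk x l" "\<not> blk x m"
    "i = 2*m \<or> i = 2*m+1" "x ! i"
  shows "DLB n (flip x i) = 2*m+1"
proof -
  have A: "\<forall>l<m. blk (flip x i) l" using assms by (auto simp: blk_flip_other)
  have p: "2*m+1 < n" using pos_lt[OF assms(2) assms(3)] .
  have B: "\<not> blk (flip x i) m" "\<not> flip x i ! (2*m) \<and> \<not> flip x i ! (2*m+1)"
    using assms p by (auto simp: blk_def flip_nth)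
  show ?thesis using DLB_eq[OF assms(3) A B(1)] B(2) by simp
qed

lemma flip_crit_false:
  assumes "length x = n" "even n" "m < n div 2" "\<forall>l<m. blk x l" "\<not> blk x m"
    "i = 2*m \<or> i = 2*m+1" "\<not> x ! i" "x ! (2*m) \<or> x ! (2*m+1)"
  shows "2*m+2 \<le> DLB n (flip x i)"
proof -
  have p: "2*m+1 < n" using pos_lt[OF assms(2) assms(3)] .
  have A: "\<forall>l<Suc m. blk (flip x i) l"
  proof (intro allI impI)
    fix l assume "l < Suc m"
    show "blk (flip x i) l"
    proof (cases "l = m")
      case True thus ?thesis using assms p by (auto simp: blk_def flip_nth)
    next
      case False thus ?thesis using assms \<open>l < Suc m\<close> by (auto simp: blk_flip_other)
    qed
  qed
  have "Suc m \<le> n div 2" using assms by simp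
  from DLB_ge[OF this A] show ?thesis by simp
qed



definition acc :: "real \<Rightarrow> nat \<Rightarrow> bool list \<Rightarrow> nat \<Rightarrow> real" where
  "acc \<alpha> n x i = (if real (DLB n x) \<le> real (DLB n (flip x i)) then 1
      else \<alpha> powr (real (DLB n (flip x i)) - real (DLB n x)))"

definition Tm :: "real \<Rightarrow> nat \<Rightarrow> bool list \<Rightarrow> nat \<Rightarrow> real" where
  "Tm \<alpha> n x i = acc \<alpha> n x i * (Phi n (DLB n (flip x i)) - Phi n (DLB n x))"

lemma powr_shift: "(\<alpha>::real) > 0 \<Longrightarrow> \<alpha> powr (a - 1) = \<alpha> powr a / \<alpha>"
  by (simp add: powr_diff)

lemma drift_sum:
  assumes n: "even n" "length x = n" "DLB n x \<noteq> n" and a: "\<alpha> > 1"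
    and S: "\<And>m. (\<Sum>k<m. real (Suc k) * \<alpha> powr (- 2 * real (Suc k))) \<le> S" and S1: "4 * S \<le> 1"
  shows "(1/\<alpha>) * (1 - 4*S) \<le> (\<Sum>i<n. Tm \<alpha> n x i)"
proof -
  obtain m where m: "m < n div 2" "\<forall>l<m. blk x l" "\<not> blk x m" using DLB_crit n by blast
  define N where "N = n div 2"
  have nN: "n = 2*N" using n unfolding N_def by simp
  have sumT: "(\<Sum>i<n. Tm \<alpha> n x i) = (\<Sum>j<N. Tm \<alpha> n x (2*j) + Tm \<alpha> n x (2*j+1))"
    unfolding nN by (rule sum_blocks)
  have a0: "\<alpha> > 0" using a by simp
  have suff: "Tm \<alpha> n x i = 0" if "m < i div 2" "i < n" for i
    using flip_suffix[OF n(2) n(1) m that] unfolding Tm_def by simp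
  have suffB: "Tm \<alpha> n x (2*j) + Tm \<alpha> n x (2*j+1) = 0" if "m < j" "j < N" for j
    using suff[of "2*j"] suff[of "2*j+1"] that nN by simp
  have pre: "DLB n (flip x (2*j)) = 2*j" "DLB n (flip x (2*j+1)) = 2*j" if "j < m" for j
    using flip_prefix[OF n(2) n(1) m(1) m(2) that] by auto
  have Phij: "Phi n (2*j) = 2*j + 1/2" if "j < m" for j
    using that m(1) by (intro Phi_even) auto
  have Sm: "(\<Sum>k<m. real (Suc k) * \<alpha> powr (- 2 * real (Suc k))) \<le> S" by (rule S)
  show ?thesis
  proof (cases "\<not> x!(2*m) \<and> \<not> x!(2*m+1)")
    case True
    have v: "DLB n x = 2*m+1" using DLB_eq[OF m] True by simp
    define h where "h d = - (4/\<alpha>) * (real d * \<alpha> powr (- 2 * real d))" for d :: nat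
    have B: "Tm \<alpha> n x (2*j) + Tm \<alpha> n x (2*j+1) \<ge>
       (if j < m then h (m - j) else if j = m then 1/\<alpha> else 0)" if "j < N" for j
    proof -
      consider "j < m" | "j = m" | "m < j" by linarith
      then show ?thesis
      proof cases
        case 1
        define d where "d = m - j"
        have e: "real (2*j) - real (2*m+1) = - 2 * real d - 1" using 1 unfolding d_def by simp
        have t: "Tm \<alpha> n x i = \<alpha> powr (- 2 * real d) / \<alpha> * (1/2 - 2 * real d)" if "i = 2*j \<or> i = 2*j+1" for i
        proof -
          have D: "DLB n (flip x i) = 2*j" using pre[OF 1] that by auto
          have "\<not> real (DLB n x) \<le> real (DLB n (flip x i))" using D v 1 by simp
          moreover have "real (DLB n (flip x i)) - real (DLB n x) = - 2 * real d - 1"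
            using D v e by simp
          ultimately have "acc \<alpha> n x i = \<alpha> powr (- 2 * real d) / \<alpha>" unfolding acc_def using a0
            by (simp add: powr_shift)
          moreover have "Phi n (DLB n (flip x i)) - Phi n (DLB n x) = 1/2 - 2 * real d"
            using D v Phij[OF 1] Phi_odd[OF n(1), of m] 1 unfolding d_def by (simp add: of_nat_diff)
          ultimately show ?thesis unfolding Tm_def by simp
        qed
        have p: "\<alpha> powr (- 2 * real d) / \<alpha> \<ge> 0" using a0 by simp
        have "\<alpha> powr (- 2 * real d) / \<alpha> * (1/2 - 2 * real d) \<ge> \<alpha> powr (- 2 * real d) / \<alpha> * (- 2 * real d)"
          by (rule mult_left_mono) (use p in auto)
        hence "Tm \<alpha> n x (2*j) + Tm \<alpha> n x (2*j+1) \<ge> h d"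
          using t[of "2*j"] t[of "2*j+1"] unfolding h_def by (simp add: algebra_simps)
        thus ?thesis using 1 d_def by simp
      next
        case 2
        have t: "Tm \<alpha> n x i = 1 / (2*\<alpha>)" if "i = 2*m \<or> i = 2*m+1" for i
        proof -
          have D: "DLB n (flip x i) = 2*m" using flip_crit00[OF n(2) n(1) m(1) m(2) _ _ that] True by simp
          have A1: "acc \<alpha> n x i = 1/\<alpha>" unfolding acc_def using D v a0 by (simp add: powr_minus_divide)
          have A2: "Phi n (DLB n (flip x i)) - Phi n (DLB n x) = 1/2"
            using D v Phi_even[of m n] Phi_odd[OF n(1), of m] m(1) by simp
          show ?thesis unfolding Tm_def A1 A2 by simp
        qed
        show ?thesis using t[of "2*m"] t[of "2*m+1"] 2 by simp
      next
        case 3 thus ?thesis using suffB[OF 3 that] by simp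
      qed
    qed
    have "(\<Sum>j<N. (if j < m then h (m - j) else if j = m then 1/\<alpha> else 0)) \<le> (\<Sum>i<n. Tm \<alpha> n x i)"
      unfolding sumT by (rule sum_mono) (use B in auto)
    moreover have "(\<Sum>j<N. (if j < m then h (m - j) else if j = m then 1/\<alpha> else 0))
        = (\<Sum>k<m. h (Suc k)) + 1/\<alpha>" using m(1) N_def by (intro sum_ifs) auto
    moreover have "(\<Sum>k<m. h (Suc k)) = - (4/\<alpha>) * (\<Sum>k<m. real (Suc k) * \<alpha> powr (- 2 * real (Suc k)))"
      unfolding h_def by (simp add: sum_distrib_left)
    moreover have "- (4/\<alpha>) * (\<Sum>k<m. real (Suc k) * \<alpha> powr (- 2 * real (Suc k))) \<ge> - (4/\<alpha>) * S"
      using Sm a0 by (intro mult_left_mono_neg) auto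
    moreover have "(1/\<alpha>) * (1 - 4*S) = 1/\<alpha> + (- (4/\<alpha>) * S)" by (simp add: algebra_simps)
    ultimately show ?thesis by linarith
  next
    case False
    have v: "DLB n x = 2*m" using DLB_eq[OF m] False by simp
    have one: "x!(2*m) \<noteq> x!(2*m+1)" using False m(3) by (auto simp: blk_def)
    define h where "h d = - 4 * (real d * \<alpha> powr (- 2 * real d))" for d :: nat
    have Phim: "Phi n (2*m) = 2*m + 1/2" using m(1) Phi_even[of m n] by simp
    have B: "Tm \<alpha> n x (2*j) + Tm \<alpha> n x (2*j+1) \<ge>
       (if j < m then h (m - j) else if j = m then 1 else 0)" if "j < N" for j
    proof -
      consider "j < m" | "j = m" | "m < j" by linarith
      then show ?thesis
      proof cases
        case 1
        define d where "d = m - j"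
        have e: "real (2*j) - real (2*m) = - 2 * real d" using 1 unfolding d_def by simp
        have t: "Tm \<alpha> n x i = \<alpha> powr (- 2 * real d) * (- 2 * real d)" if "i = 2*j \<or> i = 2*j+1" for i
        proof -
          have D: "DLB n (flip x i) = 2*j" using pre[OF 1] that by auto
          have "\<not> real (DLB n x) \<le> real (DLB n (flip x i))" using D v 1 by simp
          hence "acc \<alpha> n x i = \<alpha> powr (- 2 * real d)" unfolding acc_def using D v e
            by (simp del: of_nat_mult of_nat_add)
          moreover have "Phi n (DLB n (flip x i)) - Phi n (DLB n x) = - 2 * real d"
            using D v Phij[OF 1] Phim 1 unfolding d_def by (simp add: of_nat_diff)
          ultimately show ?thesis unfolding Tm_def by simp
        qed
        show ?thesis using t[of "2*j"] t[of "2*j+1"] 1 unfolding h_def d_def by (simp add: algebra_simps)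
      next
        case 2
        have tt: "Tm \<alpha> n x i = -1/2" if "i = 2*m \<or> i = 2*m+1" "x!i" for i
        proof -
          have D: "DLB n (flip x i) = 2*m+1" using flip_crit_true[OF n(2) n(1) m that] .
          have "acc \<alpha> n x i = 1" unfolding acc_def using D v by simp
          moreover have "Phi n (DLB n (flip x i)) - Phi n (DLB n x) = -1/2"
            using D v Phim Phi_odd[OF n(1), of m] by simp
          ultimately show ?thesis unfolding Tm_def by simp
        qed
        have tf: "Tm \<alpha> n x i \<ge> 3/2" if "i = 2*m \<or> i = 2*m+1" "\<not> x!i" for i
        proof -
          have D: "2*m+2 \<le> DLB n (flip x i)" using flip_crit_false[OF n(2) n(1) m that] one by blast
          have "acc \<alpha> n x i = 1" unfolding acc_def using D v by simp
          moreover have "Phi n (DLB n (flip x i)) \<ge> 2*m+2"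
            using Phi_ge[OF n(1) D DLB_le[OF n(1)]] by simp
          ultimately show ?thesis unfolding Tm_def using v Phim by simp
        qed
        show ?thesis
        proof (cases "x!(2*m)")
          case True
          hence "\<not> x!(2*m+1)" using one by simp
          thus ?thesis using tt[of "2*m"] tf[of "2*m+1"] True 2 by simp
        next
          case False
          hence "x!(2*m+1)" using one by simp
          thus ?thesis using tf[of "2*m"] tt[of "2*m+1"] False 2 by simp
        qed
      next
        case 3 thus ?thesis using suffB[OF 3 that] by simp
      qed
    qed
    have "(\<Sum>j<N. (if j < m then h (m - j) else if j = m then 1 else 0)) \<le> (\<Sum>i<n. Tm \<alpha> n x i)"
      unfolding sumT by (rule sum_mono) (use B in auto)
    moreover have "(\<Sum>j<N. (if j < m then h (m - j) else if j = m then 1 else 0))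
        = (\<Sum>k<m. h (Suc k)) + 1" using m(1) N_def by (intro sum_ifs) auto
    moreover have "(\<Sum>k<m. h (Suc k)) = - 4 * (\<Sum>k<m. real (Suc k) * \<alpha> powr (- 2 * real (Suc k)))"
      unfolding h_def by (simp add: sum_distrib_left)
    moreover have "(1/\<alpha>) * (1 - 4*S) \<le> 1 - 4 * S"
      using mult_right_mono[of "1/\<alpha>" 1 "1-4*S"] a S1 by simp
    ultimately show ?thesis using Sm by linarith
  qed
qed



definition M0 :: "nat \<Rightarrow> (nat \<times> real) measure" where
  "M0 n = measure_pmf (pmf_of_set {..<n}) \<Otimes>\<^sub>M uniform_measure lborel {0..1::real}"

lemma pmf_pair_countable_meas:
  fixes f :: "'a::countable \<times> 'b \<Rightarrow> 'c"
  assumes "\<And>a. (\<lambda>b. f (a, b)) \<in> measurable N K"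
  shows "f \<in> measurable (measure_pmf p \<Otimes>\<^sub>M N) K"
proof -
  have "f \<in> measurable (count_space UNIV \<Otimes>\<^sub>M N) K"
    by (rule measurable_pair_measure_countable1) (use assms in auto)
  moreover have "sets (measure_pmf p \<Otimes>\<^sub>M N) = sets (count_space UNIV \<Otimes>\<^sub>M N)"
    by (rule sets_pair_measure_cong) auto
  ultimately show ?thesis using measurable_cong_sets by blast
qed

lemma step_meas_u: "(\<lambda>u. metro_step \<alpha> f x (i, u)) \<in> measurable (uniform_measure lborel {0..1::real}) (count_space UNIV)"
  unfolding metro_step_def Let_def by measurable

lemma step_meas: "(\<lambda>r. metro_step \<alpha> f x r) \<in> measurable (M0 n) (count_space UNIV)"
  unfolding M0_def by (rule pmf_pair_countable_meas) (rule step_meas_u)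

lemma traj_meas: "(\<lambda>\<omega>. metro_traj \<alpha> f x \<omega> t) \<in> measurable (PiM UNIV (\<lambda>_. M0 n)) (count_space UNIV)"
proof (induction t)
  case 0 thus ?case by simp
next
  case (Suc t)
  have "(\<lambda>\<omega>. metro_step \<alpha> f y (\<omega> t)) \<in> measurable (PiM UNIV (\<lambda>_. M0 n)) (count_space UNIV)" for y
    by (rule measurable_compose[OF measurable_component_singleton[of t UNIV "\<lambda>_. M0 n"] step_meas]) simp
  then have "(\<lambda>\<omega>. metro_step \<alpha> f (metro_traj \<alpha> f x \<omega> t) (\<omega> t)) \<in> measurable (PiM UNIV (\<lambda>_. M0 n)) (count_space UNIV)"
    by (rule measurable_compose_countable'[where I=UNIV and f="\<lambda>y \<omega>. metro_step \<alpha> f y (\<omega> t)", OF _ Suc countableI_type])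
  thus ?case by simp
qed

lemma traj_pred: "Measurable.pred (PiM UNIV (\<lambda>_. M0 n)) (\<lambda>\<omega>. P (metro_traj \<alpha> f x \<omega> t))"
  by (rule measurable_compose[OF traj_meas measurable_count_space])

definition ind :: "nat \<Rightarrow> real \<Rightarrow> (bool list \<Rightarrow> real) \<Rightarrow> bool list \<Rightarrow> (nat \<Rightarrow> nat \<times> real) \<Rightarrow> nat \<Rightarrow> ennreal" where
  "ind n \<alpha> f x \<omega> t = (if \<forall>s\<le>t. \<not> is_optimum n f (metro_traj \<alpha> f x \<omega> s) then 1 else 0)"

lemma ind_meas[measurable]: "(\<lambda>\<omega>. ind n \<alpha> f x \<omega> t) \<in> borel_measurable (PiM UNIV (\<lambda>_. M0 n))"
proof -
  have [measurable]: "Measurable.pred (PiM UNIV (\<lambda>_. M0 n)) (\<lambda>\<omega>. is_optimum n f (metro_traj \<alpha> f x \<omega> s))" for s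
    by (rule traj_pred)
  show ?thesis unfolding ind_def by measurable
qed

lemma ind_meas2: "(\<lambda>(x, \<omega>). 1 + (\<Sum>t. ind n \<alpha> f x \<omega> t)) \<in> borel_measurable (measure_pmf p \<Otimes>\<^sub>M PiM UNIV (\<lambda>_. M0 n))"
  by (rule pmf_pair_countable_meas) simp



definition accf :: "real \<Rightarrow> (bool list \<Rightarrow> real) \<Rightarrow> bool list \<Rightarrow> nat \<Rightarrow> real" where
  "accf \<alpha> f x i = (if f x \<le> f (flip x i) then 1 else \<alpha> powr (f (flip x i) - f x))"

lemma accf_bounds: "\<alpha> > 1 \<Longrightarrow> 0 \<le> accf \<alpha> f x i \<and> accf \<alpha> f x i \<le> 1"
  unfolding accf_def by (auto intro!: less_imp_le[OF powr_less_one])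

lemma uniform_integral:
  assumes "\<alpha> > 1" "\<And>y. h y \<ge> 0"
  shows "(\<integral>\<^sup>+u. ennreal (h (metro_step \<alpha> f x (i, u))) \<partial>uniform_measure lborel {0..1::real})
       = ennreal (h x + accf \<alpha> f x i * (h (flip x i) - h x))"
proof -
  let ?U = "uniform_measure lborel {0..1::real}"
  interpret U: prob_space ?U by (rule prob_space_uniform_measure) auto
  define y where "y = flip x i"
  have st: "metro_step \<alpha> f x (i, u) = (if f x \<le> f y then y else if u < \<alpha> powr (f y - f x) then y else x)" for u
    unfolding metro_step_def y_def flip_def Let_def by simp
  show ?thesis
  proof (cases "f x \<le> f y")
    case True
    hence "accf \<alpha> f x i = 1" unfolding accf_def y_def by simp
    moreover have "(\<integral>\<^sup>+u. ennreal (h (metro_step \<alpha> f x (i, u))) \<partial>?U) = ennreal (h y)"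
      using True by (simp add: st U.emeasure_space_1)
    ultimately show ?thesis unfolding y_def by simp
  next
    case False
    define p where "p = \<alpha> powr (f y - f x)"
    have p: "0 < p" "p < 1" unfolding p_def using False assms(1) by (auto intro: powr_less_one)
    have acc: "accf \<alpha> f x i = p" unfolding accf_def p_def y_def using False y_def by simp
    have e1: "emeasure ?U {..<p} = ennreal p"
    proof -
      have "{0..1} \<inter> {..<p} = {0..<p}" using p by auto
      thus ?thesis using p by (simp add: divide_ennreal_def)
    qed
    have e2: "emeasure ?U {p..} = ennreal (1 - p)"
    proof -
      have "{0..1} \<inter> {p..} = {p..1}" using p by auto
      thus ?thesis using p by (simp add: divide_ennreal_def)
    qed
    have "(\<integral>\<^sup>+u. ennreal (h (metro_step \<alpha> f x (i, u))) \<partial>?U)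
        = (\<integral>\<^sup>+u. ennreal (h y) * indicator {..<p} u + ennreal (h x) * indicator {p..} u \<partial>?U)"
      by (intro nn_integral_cong) (auto simp: st False p_def[symmetric] indicator_def)
    also have "\<dots> = ennreal (h y) * emeasure ?U {..<p} + ennreal (h x) * emeasure ?U {p..}"
      by (subst nn_integral_add) (auto simp: nn_integral_cmult_indicator)
    also have "\<dots> = ennreal (h y * p + h x * (1 - p))"
    proof -
      have hx: "0 \<le> h x" "0 \<le> h y" using assms(2) by auto
      have "ennreal (h y * p + h x * (1 - p)) = ennreal (h y * p) + ennreal (h x * (1 - p))"
        using p hx by (intro ennreal_plus) auto
      also have "\<dots> = ennreal (h y) * ennreal p + ennreal (h x) * ennreal (1 - p)"
        using p hx by (simp add: ennreal_mult)
      finally show ?thesis unfolding e1 e2 by simp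
    qed
    also have "h y * p + h x * (1 - p) = h x + accf \<alpha> f x i * (h (flip x i) - h x)"
      unfolding acc y_def by (simp add: algebra_simps)
    finally show ?thesis .
  qed
qed

lemma exp_step:
  assumes "n > 0" "\<alpha> > 1" "\<And>y. h y \<ge> 0"
  shows "(\<integral>\<^sup>+r. ennreal (h (metro_step \<alpha> f x r)) \<partial>M0 n)
       = ennreal ((\<Sum>i<n. h x + accf \<alpha> f x i * (h (flip x i) - h x)) / n)"
proof -
  let ?U = "uniform_measure lborel {0..1::real}"
  interpret U: prob_space ?U by (rule prob_space_uniform_measure) auto
  have nn: "0 \<le> h x + accf \<alpha> f x i * (h (flip x i) - h x)" for i
  proof -
    have "h x + accf \<alpha> f x i * (h (flip x i) - h x) = (1 - accf \<alpha> f x i) * h x + accf \<alpha> f x i * h (flip x i)"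
      by (simp add: algebra_simps)
    thus ?thesis using accf_bounds[OF assms(2)] assms(3) by simp
  qed
  have meas: "(\<lambda>r. ennreal (h (metro_step \<alpha> f x r))) \<in> borel_measurable (measure_pmf (pmf_of_set {..<n}) \<Otimes>\<^sub>M ?U)"
  proof -
    have "(\<lambda>y. ennreal (h y)) \<in> measurable (count_space UNIV) borel" by simp
    from measurable_compose[OF step_meas[unfolded M0_def] this] show ?thesis .
  qed
  have "(\<integral>\<^sup>+r. ennreal (h (metro_step \<alpha> f x r)) \<partial>M0 n)
      = (\<integral>\<^sup>+i. \<integral>\<^sup>+u. ennreal (h (metro_step \<alpha> f x (i, u))) \<partial>?U \<partial>measure_pmf (pmf_of_set {..<n}))"
    unfolding M0_def by (rule U.nn_integral_fst[OF meas, symmetric])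
  also have "\<dots> = (\<integral>\<^sup>+i. ennreal (h x + accf \<alpha> f x i * (h (flip x i) - h x)) \<partial>measure_pmf (pmf_of_set {..<n}))"
    by (intro nn_integral_cong uniform_integral assms)
  also have "\<dots> = (\<Sum>i<n. ennreal (h x + accf \<alpha> f x i * (h (flip x i) - h x))) / card {..<n}"
    using assms(1) by (subst nn_integral_pmf_of_set) auto
  also have "\<dots> = ennreal (\<Sum>i<n. h x + accf \<alpha> f x i * (h (flip x i) - h x)) / ennreal (real n)"
    using nn by (subst sum_ennreal) (auto simp: ennreal_of_nat_eq_real_of_nat)
  also have "\<dots> = ennreal ((\<Sum>i<n. h x + accf \<alpha> f x i * (h (flip x i) - h x)) / n)"
    using nn assms(1) by (intro divide_ennreal) (auto intro: sum_nonneg)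
  finally show ?thesis .
qed



lemma (in prob_space) PiM_shift:
  assumes [measurable]: "F \<in> borel_measurable (PiM UNIV (\<lambda>_::nat. M))"
  shows "(\<integral>\<^sup>+\<omega>. F \<omega> \<partial>PiM UNIV (\<lambda>_::nat. M)) = (\<integral>\<^sup>+r. \<integral>\<^sup>+\<omega>'. F (case_nat r \<omega>') \<partial>PiM UNIV (\<lambda>_::nat. M) \<partial>M)"
proof -
  interpret S: sequence_space M ..
  interpret P: pair_sigma_finite M "\<Pi>\<^sub>M i::nat\<in>UNIV. M" ..
  have "(\<integral>\<^sup>+\<omega>. F \<omega> \<partial>S.S) = (\<integral>\<^sup>+X. F ((\<lambda>(s, \<omega>). case_nat s \<omega>) X) \<partial>(M \<Otimes>\<^sub>M S.S))"
    by (subst S.PiM_iter[symmetric]) (simp add: nn_integral_distr)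
  also have "\<dots> = (\<integral>\<^sup>+x. \<integral>\<^sup>+X. F ((\<lambda>(s, \<omega>). case_nat s \<omega>) (x, X)) \<partial>S.S \<partial>M)"
    by (subst S.nn_integral_fst) simp_all
  finally show ?thesis by simp
qed

lemma traj_case: "metro_traj \<alpha> f x (case_nat r \<omega>') (Suc s) = metro_traj \<alpha> f (metro_step \<alpha> f x r) \<omega>' s"
  by (induction s) auto

lemma all_le_Suc: "(\<forall>s\<le>Suc t. P s) = (P 0 \<and> (\<forall>s\<le>t. P (Suc s)))"
  by (auto, case_tac s, auto)

definition W :: "nat \<Rightarrow> real \<Rightarrow> (bool list \<Rightarrow> real) \<Rightarrow> nat \<Rightarrow> bool list \<Rightarrow> (nat \<Rightarrow> nat \<times> real) \<Rightarrow> ennreal" where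
  "W n \<alpha> f K x \<omega> = (\<Sum>t<K. ind n \<alpha> f x \<omega> t)"

lemma W_meas[measurable]: "(\<lambda>\<omega>. W n \<alpha> f K x \<omega>) \<in> borel_measurable (PiM UNIV (\<lambda>_. M0 n))"
  unfolding W_def by measurable

lemma W_rec: "W n \<alpha> f (Suc K) x (case_nat r \<omega>') =
   (if is_optimum n f x then 0 else 1 + W n \<alpha> f K (metro_step \<alpha> f x r) \<omega>')"
proof -
  have i0: "ind n \<alpha> f x (case_nat r \<omega>') 0 = (if is_optimum n f x then 0 else 1)"
    unfolding ind_def by simp
  have iS: "ind n \<alpha> f x (case_nat r \<omega>') (Suc t) = (if is_optimum n f x then 0 else ind n \<alpha> f (metro_step \<alpha> f x r) \<omega>' t)" for t
    unfolding ind_def all_le_Suc traj_case by simp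
  show ?thesis unfolding W_def sum.lessThan_Suc_shift i0 iS by simp
qed

lemma length_step: "length (metro_step \<alpha> f x r) = length x"
  unfolding metro_step_def Let_def by simp

lemma opt_iff:
  assumes "even n" "length x = n"
  shows "is_optimum n (\<lambda>x. real (DLB n x)) x \<longleftrightarrow> DLB n x = n"
proof
  assume "is_optimum n (\<lambda>x. real (DLB n x)) x"
  hence "real (DLB n (replicate n True)) \<le> real (DLB n x)" unfolding is_optimum_def by auto
  moreover have "DLB n (replicate n True) = n"
    by (rule DLB_all) (auto simp: blk_def)
  ultimately show "DLB n x = n" using DLB_le[OF assms(1), of x] by simp
next
  assume "DLB n x = n"
  thus "is_optimum n (\<lambda>x. real (DLB n x)) x" unfolding is_optimum_def
    using assms DLB_le[OF assms(1)] by auto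
qed



lemma prob_M0: "n > 0 \<Longrightarrow> prob_space (M0 n)"
proof -
  assume n: "n > 0"
  interpret U: prob_space "uniform_measure lborel {0..1::real}" by (rule prob_space_uniform_measure) auto
  interpret P: pair_prob_space "measure_pmf (pmf_of_set {..<n})" "uniform_measure lborel {0..1::real}"
    by unfold_locales
  show ?thesis unfolding M0_def by (rule P.prob_space_axioms)
qed

lemma real_step:
  fixes C :: real
  assumes "C > 0" "C \<le> (\<Sum>i<n. Tm \<alpha> n x i)" "n > 0"
    and g: "\<And>y. g y = real n - Phi n (DLB n y)"
    and h: "\<And>y. h y = 1 + real n * g y / C"
  shows "(\<Sum>i<n. h x + acc \<alpha> n x i * (h (flip x i) - h x)) / n \<le> real n * g x / C"
proof -
  have e: "acc \<alpha> n x i * (h (flip x i) - h x) = - (n / C) * Tm \<alpha> n x i" for i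
    unfolding h g Tm_def using assms(1) by (simp add: field_simps)
  have "(\<Sum>i<n. h x + acc \<alpha> n x i * (h (flip x i) - h x)) = (\<Sum>i<n. h x - (n/C) * Tm \<alpha> n x i)"
    by (rule sum.cong) (simp_all add: e)
  also have "\<dots> = (\<Sum>i<n. h x) - (\<Sum>i<n. (n/C) * Tm \<alpha> n x i)" by (rule sum_subtractf)
  also have "\<dots> = n * h x - (n/C) * (\<Sum>i<n. Tm \<alpha> n x i)" by (simp only: sum_distrib_left) simp
  finally have "(\<Sum>i<n. h x + acc \<alpha> n x i * (h (flip x i) - h x)) = n * h x - (n/C) * (\<Sum>i<n. Tm \<alpha> n x i)" .
  hence "(\<Sum>i<n. h x + acc \<alpha> n x i * (h (flip x i) - h x)) / n = h x - (\<Sum>i<n. Tm \<alpha> n x i) / C"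
    using assms(3) by (simp add: field_simps)
  also have "\<dots> \<le> h x - 1" using assms(1,2) by (simp add: field_simps)
  also have "\<dots> = real n * g x / C" using h by simp
  finally show ?thesis .
qed

lemma C_facts:
  assumes a: "\<alpha> > sqrt 2 + 1"
  defines "S \<equiv> (\<Sum>k. real (Suc k) * \<alpha> powr (- 2 * real (Suc k)))"
  shows "C_const \<alpha> = (1/\<alpha>) * (1 - 4*S)" "C_const \<alpha> > 0" "4 * S \<le> 1" "\<alpha> > 2"
    "\<And>m. (\<Sum>k<m. real (Suc k) * \<alpha> powr (- 2 * real (Suc k))) \<le> S" "C_const \<alpha> \<le> 1/\<alpha>"
proof -
  have s2: "sqrt 2 > 1" by simp
  show a2: "\<alpha> > 2" using a s2 by linarith
  have a1: "\<alpha> > 1" using a2 by simp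
  have "\<And>X::real. (2/\<alpha>) * (1/2 - 2*X) = (1/\<alpha>) * (1 - 4*X)" using a1 by (simp add: field_simps)
  thus e: "C_const \<alpha> = (1/\<alpha>) * (1 - 4*S)" unfolding C_const_def S_def by blast
  have S4: "4 * S < 1" unfolding S_def by (rule S_bound[OF a])
  thus "4 * S \<le> 1" by simp
  show "C_const \<alpha> > 0" unfolding e using S4 a1 by simp
  have sm: "summable (\<lambda>k. real (Suc k) * \<alpha> powr (- 2 * real (Suc k)))"
    using S_sums[OF a1] by (rule sums_summable)
  show "(\<Sum>k<m. real (Suc k) * \<alpha> powr (- 2 * real (Suc k))) \<le> S" for m
    unfolding S_def by (rule sum_le_suminf[OF sm]) auto
  have "S \<ge> 0" unfolding S_def by (rule suminf_nonneg[OF sm]) auto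
  thus "C_const \<alpha> \<le> 1/\<alpha>" unfolding e using a1 by (simp add: field_simps)
qed

lemma W_bound:
  assumes n: "even n" "n > 0" and a: "\<alpha> > sqrt 2 + 1"
  shows "\<forall>x. length x = n \<longrightarrow> (\<integral>\<^sup>+\<omega>. W n \<alpha> (\<lambda>x. real (DLB n x)) K x \<omega> \<partial>PiM UNIV (\<lambda>_. M0 n))
     \<le> ennreal (real n * (real n - Phi n (DLB n x)) / C_const \<alpha>)"
proof (induction K)
  case 0 thus ?case by (simp add: W_def)
next
  case (Suc K)
  define f where "f = (\<lambda>x. real (DLB n x))"
  define C where "C = C_const \<alpha>"
  define g where "g = (\<lambda>y. real n - Phi n (DLB n y))"
  define h where "h = (\<lambda>y. 1 + real n * g y / C)"
  have C0: "C > 0" unfolding C_def using C_facts[OF a] by simp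
  have a1: "\<alpha> > 1" using C_facts(4)[OF a] by simp
  have g0: "g y \<ge> 0" for y unfolding g_def using Phi_le[OF n(1) DLB_le[OF n(1)]] by simp
  have h0: "h y \<ge> 0" for y unfolding h_def using g0[of y] C0 by simp
  interpret M: prob_space "M0 n" by (rule prob_M0[OF n(2)])
  interpret S: product_prob_space "\<lambda>_. M0 n" "UNIV :: nat set" by unfold_locales
  show ?case
  proof (intro allI impI)
    fix x :: "bool list" assume len: "length x = n"
    have IH: "(\<integral>\<^sup>+\<omega>. W n \<alpha> f K y \<omega> \<partial>PiM UNIV (\<lambda>_. M0 n)) \<le> ennreal (real n * g y / C)" if "length y = n" for y
      using Suc that unfolding f_def g_def C_def by simp
    have "(\<integral>\<^sup>+\<omega>. W n \<alpha> f (Suc K) x \<omega> \<partial>PiM UNIV (\<lambda>_. M0 n))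
        = (\<integral>\<^sup>+r. \<integral>\<^sup>+\<omega>'. W n \<alpha> f (Suc K) x (case_nat r \<omega>') \<partial>PiM UNIV (\<lambda>_. M0 n) \<partial>M0 n)"
      by (rule M.PiM_shift) simp
    also have "\<dots> \<le> ennreal (real n * g x / C)"
    proof (cases "is_optimum n f x")
      case True thus ?thesis unfolding W_rec by simp
    next
      case False
      hence nopt: "DLB n x \<noteq> n" using opt_iff[OF n(1) len] unfolding f_def by simp
      have "(\<integral>\<^sup>+r. \<integral>\<^sup>+\<omega>'. W n \<alpha> f (Suc K) x (case_nat r \<omega>') \<partial>PiM UNIV (\<lambda>_. M0 n) \<partial>M0 n)
          = (\<integral>\<^sup>+r. 1 + (\<integral>\<^sup>+\<omega>'. W n \<alpha> f K (metro_step \<alpha> f x r) \<omega>' \<partial>PiM UNIV (\<lambda>_. M0 n)) \<partial>M0 n)"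
        unfolding W_rec using False
        by (intro nn_integral_cong) (simp add: nn_integral_add S.emeasure_space_1)
      also have "\<dots> \<le> (\<integral>\<^sup>+r. ennreal (h (metro_step \<alpha> f x r)) \<partial>M0 n)"
      proof (intro nn_integral_mono)
        fix r
        have "(\<integral>\<^sup>+\<omega>'. W n \<alpha> f K (metro_step \<alpha> f x r) \<omega>' \<partial>PiM UNIV (\<lambda>_. M0 n)) \<le> ennreal (real n * g (metro_step \<alpha> f x r) / C)"
          by (rule IH) (simp add: length_step len)
        hence "1 + (\<integral>\<^sup>+\<omega>'. W n \<alpha> f K (metro_step \<alpha> f x r) \<omega>' \<partial>PiM UNIV (\<lambda>_. M0 n)) \<le> 1 + ennreal (real n * g (metro_step \<alpha> f x r) / C)"
          by (rule add_left_mono)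
        also have "\<dots> = ennreal (h (metro_step \<alpha> f x r))"
          unfolding h_def using g0 C0 by (subst ennreal_plus) auto
        finally show "1 + (\<integral>\<^sup>+\<omega>'. W n \<alpha> f K (metro_step \<alpha> f x r) \<omega>' \<partial>PiM UNIV (\<lambda>_. M0 n)) \<le> ennreal (h (metro_step \<alpha> f x r))" .
      qed
      also have "\<dots> = ennreal ((\<Sum>i<n. h x + accf \<alpha> f x i * (h (flip x i) - h x)) / n)"
        by (rule exp_step[OF n(2) a1 h0])
      also have "\<dots> \<le> ennreal (real n * g x / C)"
      proof (rule ennreal_leI)
        have accf: "accf \<alpha> f x i = acc \<alpha> n x i" for i unfolding accf_def acc_def f_def by simp
        have "C \<le> (\<Sum>i<n. Tm \<alpha> n x i)"
          unfolding C_def C_facts(1)[OF a]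
          by (rule drift_sum[OF n(1) len nopt a1]) (use C_facts[OF a] in auto)
        thus "(\<Sum>i<n. h x + accf \<alpha> f x i * (h (flip x i) - h x)) / n \<le> real n * g x / C"
          unfolding accf by (intro real_step[OF C0 _ n(2)]) (auto simp: g_def h_def)
      qed
      finally show ?thesis .
    qed
    finally show "(\<integral>\<^sup>+\<omega>. W n \<alpha> (\<lambda>x. real (DLB n x)) (Suc K) x \<omega> \<partial>PiM UNIV (\<lambda>_. M0 n))
        \<le> ennreal (real n * (real n - Phi n (DLB n x)) / C_const \<alpha>)"
      unfolding f_def g_def C_def by simp
  qed
qed



lemma runtime_le: "metro_runtime n \<alpha> f x \<omega> \<le> 1 + (\<Sum>t. ind n \<alpha> f x \<omega> t)"
proof (cases "\<exists>t. is_optimum n f (metro_traj \<alpha> f x \<omega> t)")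
  case True
  define t0 where "t0 = (LEAST t. is_optimum n f (metro_traj \<alpha> f x \<omega> t))"
  have r: "metro_runtime n \<alpha> f x \<omega> = 1 + of_nat t0"
    unfolding metro_runtime_def t0_def[symmetric] using True
    by (simp add: ennreal_of_nat_eq_real_of_nat ennreal_plus)
  have "ind n \<alpha> f x \<omega> t = 1" if "t < t0" for t
  proof -
    have "\<not> is_optimum n f (metro_traj \<alpha> f x \<omega> s)" if "s \<le> t" for s
      using not_less_Least[of s "\<lambda>t. is_optimum n f (metro_traj \<alpha> f x \<omega> t)"] that \<open>t < t0\<close>
      unfolding t0_def by linarith
    thus ?thesis unfolding ind_def by auto
  qed
  hence "(\<Sum>t<t0. ind n \<alpha> f x \<omega> t) = of_nat t0" by simp
  moreover have "(\<Sum>t<t0. ind n \<alpha> f x \<omega> t) \<le> (\<Sum>t. ind n \<alpha> f x \<omega> t)"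
    by (rule sum_le_suminf[OF summableI]) auto
  ultimately show ?thesis unfolding r by (metis add_left_mono)
next
  case False
  have i1: "ind n \<alpha> f x \<omega> t = 1" for t unfolding ind_def using False by auto
  have "of_nat K \<le> (\<Sum>t. ind n \<alpha> f x \<omega> t)" for K
  proof -
    have "(\<Sum>t<K. ind n \<alpha> f x \<omega> t) \<le> (\<Sum>t. ind n \<alpha> f x \<omega> t)"
      by (rule sum_le_suminf[OF summableI]) auto
    thus ?thesis using i1 by simp
  qed
  hence "(SUP K. of_nat K :: ennreal) \<le> (\<Sum>t. ind n \<alpha> f x \<omega> t)" by (intro SUP_least) auto
  hence "(\<Sum>t. ind n \<alpha> f x \<omega> t) = top" unfolding ennreal_SUP_of_nat_eq_top by (simp add: top_unique)
  thus ?thesis by simp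
qed

lemma flip_flip: "0 < length x \<Longrightarrow> flip (flip x 0) 0 = x"
  unfolding flip_def by simp

lemma Phi_bit0:
  assumes "even n" "2 \<le> n" "length x = n" "x ! 0"
  shows "1/2 \<le> Phi n (DLB n x)"
proof (cases "blk x 0")
  case True
  have "2*1 \<le> DLB n x" by (rule DLB_ge) (use assms True in auto)
  hence "real 2 \<le> Phi n (DLB n x)" by (intro Phi_ge[OF assms(1) _ DLB_le[OF assms(1)]]) auto
  thus ?thesis by simp
next
  case False
  have "DLB n x = 0" using DLB_eq[of 0 n x] False assms by simp
  thus ?thesis using assms unfolding Phi_def by simp
qed

lemma Phi_sum:
  assumes "even n" "2 \<le> n"
  defines "L \<equiv> {xs :: bool list. length xs = n}"
  shows "real (card L) / 4 \<le> (\<Sum>x\<in>L. Phi n (DLB n x))"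
proof -
  have fl: "(\<Sum>x\<in>L. Phi n (DLB n (flip x 0))) = (\<Sum>x\<in>L. Phi n (DLB n x))"
    by (rule sum.reindex_bij_witness[where i="\<lambda>x. flip x 0" and j="\<lambda>x. flip x 0"])
       (use assms in \<open>auto simp: L_def flip_flip\<close>)
  have pair: "1/2 \<le> Phi n (DLB n x) + Phi n (DLB n (flip x 0))" if "x \<in> L" for x
  proof -
    have len: "length x = n" using that L_def by simp
    have z1: "0 \<le> Phi n (DLB n x)" "0 \<le> Phi n (DLB n (flip x 0))"
      using Phi_nonneg[OF assms(1) DLB_le[OF assms(1)]] by auto
    show ?thesis
    proof (cases "x ! 0")
      case True thus ?thesis using Phi_bit0[OF assms(1,2) len] z1 by fastforce
    next
      case False
      have "flip x 0 ! 0" using False len assms(2) by (simp add: flip_nth)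
      thus ?thesis using Phi_bit0[OF assms(1,2), of "flip x 0"] len z1 by fastforce
    qed
  qed
  have "real (card L) / 2 = (\<Sum>x\<in>L. 1/2)" by simp
  also have "\<dots> \<le> (\<Sum>x\<in>L. Phi n (DLB n x) + Phi n (DLB n (flip x 0)))" by (rule sum_mono) (rule pair)
  also have "\<dots> = 2 * (\<Sum>x\<in>L. Phi n (DLB n x))" unfolding sum.distrib fl by simp
  finally show ?thesis by simp
qed



theorem theorem13:
  fixes n :: nat and \<alpha> :: real
  assumes "even n" and "n > 0" and "\<alpha> > sqrt 2 + 1"
  shows "expected_runtime n \<alpha> (\<lambda>x. real (DLB n x)) \<le> ennreal (real n ^ 2 / C_const \<alpha>)"
proof -
  define f where "f = (\<lambda>x. real (DLB n x))"
  define L where "L = {xs :: bool list. length xs = n}"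
  define C where "C = C_const \<alpha>"
  define B where "B = (\<lambda>x. (real n / C) * (real n - Phi n (DLB n x)))"
  define S where "S = PiM UNIV (\<lambda>_::nat. M0 n)"
  have n2: "2 \<le> n" using assms(1,2) by presburger
  have C0: "C > 0" and Ca: "C \<le> 1/\<alpha>" and a2: "\<alpha> > 2" unfolding C_def using C_facts[OF assms(3)] by auto
  have C4: "4 * C \<le> real n"
  proof -
    have "1/\<alpha> < 1/2" using a2 by (simp add: field_simps)
    thus ?thesis using Ca n2 by linarith
  qed
  have Lfin: "finite L" unfolding L_def using finite_lists_length_eq[of "UNIV :: bool set" n] by simp
  have Lne: "L \<noteq> {}" unfolding L_def by (auto intro!: exI[of _ "replicate n True"])
  have B0: "0 \<le> B x" for x
    unfolding B_def using Phi_le[OF assms(1) DLB_le[OF assms(1)]] C0 by simp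
  interpret M: prob_space "M0 n" by (rule prob_M0[OF assms(2)])
  interpret PS: prob_space S unfolding S_def by (rule prob_space_PiM) (rule M.prob_space_axioms)
  have sp: "metro_space n = measure_pmf (pmf_of_set L) \<Otimes>\<^sub>M S"
    unfolding metro_space_def M0_def S_def L_def ..
  have inner: "(\<integral>\<^sup>+\<omega>. 1 + (\<Sum>t. ind n \<alpha> f x \<omega> t) \<partial>S) \<le> ennreal (1 + B x)" if "x \<in> L" for x
  proof -
    have "(\<integral>\<^sup>+\<omega>. 1 + (\<Sum>t. ind n \<alpha> f x \<omega> t) \<partial>S) = 1 + (\<integral>\<^sup>+\<omega>. (\<Sum>t. ind n \<alpha> f x \<omega> t) \<partial>S)"
    proof -
      have m1: "(\<lambda>\<omega>. (\<Sum>t. ind n \<alpha> f x \<omega> t)) \<in> borel_measurable S" unfolding S_def by measurable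
      show ?thesis by (subst nn_integral_add) (auto simp: PS.emeasure_space_1 m1)
    qed
    also have "(\<integral>\<^sup>+\<omega>. (\<Sum>t. ind n \<alpha> f x \<omega> t) \<partial>S) = (\<Sum>t. \<integral>\<^sup>+\<omega>. ind n \<alpha> f x \<omega> t \<partial>S)"
      by (rule nn_integral_suminf) (simp add: S_def)
    also have "(\<Sum>t. \<integral>\<^sup>+\<omega>. ind n \<alpha> f x \<omega> t \<partial>S) \<le> ennreal (B x)"
    proof (rule suminf_le_const[OF summableI])
      fix K
      have "(\<Sum>t<K. \<integral>\<^sup>+\<omega>. ind n \<alpha> f x \<omega> t \<partial>S) = (\<integral>\<^sup>+\<omega>. W n \<alpha> f K x \<omega> \<partial>S)"
        unfolding W_def by (rule nn_integral_sum[symmetric]) (simp add: S_def)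
      also have "\<dots> \<le> ennreal (B x)"
        using W_bound[OF assms(1,2,3), of K] that unfolding S_def f_def B_def C_def L_def
        by (simp add: field_simps)
      finally show "(\<Sum>t<K. \<integral>\<^sup>+\<omega>. ind n \<alpha> f x \<omega> t \<partial>S) \<le> ennreal (B x)" .
    qed
    finally have "(\<integral>\<^sup>+\<omega>. 1 + (\<Sum>t. ind n \<alpha> f x \<omega> t) \<partial>S) \<le> 1 + ennreal (B x)"
      by (metis add_left_mono)
    also have "\<dots> = ennreal (1 + B x)" using B0[of x] by (simp add: ennreal_plus)
    finally show ?thesis .
  qed
  have "expected_runtime n \<alpha> f \<le> (\<integral>\<^sup>+\<omega>. 1 + (\<Sum>t. ind n \<alpha> f (fst \<omega>) (snd \<omega>) t) \<partial>metro_space n)"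
    unfolding expected_runtime_def by (intro nn_integral_mono runtime_le)
  also have "\<dots> = (\<integral>\<^sup>+\<omega>. (\<lambda>(x, \<omega>). 1 + (\<Sum>t. ind n \<alpha> f x \<omega> t)) \<omega> \<partial>(measure_pmf (pmf_of_set L) \<Otimes>\<^sub>M S))"
    unfolding sp by (simp add: case_prod_beta')
  also have "\<dots> = (\<integral>\<^sup>+x. \<integral>\<^sup>+\<omega>. 1 + (\<Sum>t. ind n \<alpha> f x \<omega> t) \<partial>S \<partial>measure_pmf (pmf_of_set L))"
    by (subst PS.nn_integral_fst[symmetric]) (auto simp: S_def intro: ind_meas2)
  also have "\<dots> = (\<Sum>x\<in>L. \<integral>\<^sup>+\<omega>. 1 + (\<Sum>t. ind n \<alpha> f x \<omega> t) \<partial>S) / card L"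
    using Lfin Lne by (subst nn_integral_pmf_of_set) auto
  also have "\<dots> \<le> (\<Sum>x\<in>L. ennreal (1 + B x)) / card L"
    by (intro divide_right_mono_ennreal sum_mono inner)
  also have "\<dots> = ennreal ((\<Sum>x\<in>L. 1 + B x) / card L)"
  proof -
    have "(\<Sum>x\<in>L. ennreal (1 + B x)) = ennreal (\<Sum>x\<in>L. 1 + B x)"
      using B0 by (intro sum_ennreal) (simp add: add_nonneg_nonneg)
    moreover have "card L > 0" using Lfin Lne by (simp add: card_gt_0_iff)
    ultimately show ?thesis using B0
      by (simp add: ennreal_of_nat_eq_real_of_nat divide_ennreal sum_nonneg add_nonneg_nonneg)
  qed
  also have "\<dots> \<le> ennreal (real n ^ 2 / C)"
  proof (rule ennreal_leI)
    define c where "c = real (card L)"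
    define P where "P = (\<Sum>x\<in>L. Phi n (DLB n x))"
    have c0: "c > 0" unfolding c_def using Lfin Lne by (simp add: card_gt_0_iff)
    have P4: "c / 4 \<le> P" unfolding c_def P_def L_def using Phi_sum[OF assms(1) n2] by simp
    have sB: "(\<Sum>x\<in>L. 1 + B x) = c + (real n / C) * (c * real n - P)"
    proof -
      have "(\<Sum>x\<in>L. 1 + B x) = c + (\<Sum>x\<in>L. B x)" unfolding c_def by (simp add: sum.distrib)
      moreover have "(\<Sum>x\<in>L. B x) = (real n / C) * (\<Sum>x\<in>L. real n - Phi n (DLB n x))"
        unfolding B_def by (simp only: sum_distrib_left)
      moreover have "(\<Sum>x\<in>L. real n - Phi n (DLB n x)) = c * real n - P"
        unfolding c_def P_def by (simp add: sum_subtractf)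
      ultimately show ?thesis by simp
    qed
    have "c * C \<le> real n * P"
    proof -
      have "c * C = (c/4) * (4 * C)" by simp
      also have "\<dots> \<le> P * real n" using P4 C4 c0 C0 by (intro mult_mono) auto
      finally show ?thesis by (simp add: mult.commute)
    qed
    hence k: "1 \<le> (real n * P) / (C * c)" using c0 C0 by (simp add: field_simps)
    have "(c + (real n / C) * (c * real n - P)) / c = 1 + real n ^ 2 / C - (real n * P) / (C * c)"
      using c0 C0 by (simp add: field_simps power2_eq_square)
    thus "(\<Sum>x\<in>L. 1 + B x) / real (card L) \<le> real n ^ 2 / C"
      unfolding sB c_def[symmetric] using k by linarith
  qed
  finally show ?thesis unfolding f_def C_def .
qed

end
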